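(* Let $\Omega=[\alpha,\beta]\subset\mathbb{R}$ be a compact interval with $\alpha<\beta$, let $p_1,\dots,p_n\in(\alpha,\beta)$, and let $k_1,k_2,k_3,\dots\in\{1,\dots,n\}$ be a sequence in which every value $1,\dots,n$ occurs infinitely many times. Define the relaxation $$F_m=G_{p_{k_m}}G_{p_{k_{m-1}}}\cdots G_{p_{k_1}}0_\Omega,\qquad m\ge 1.$$ Then the sequence $(F_m)$ stabilizes: there exists $m_0$ such that $F_m=F_{m_0}$ for all $m\ge m_0$.
   Context: Let $\Omega=[\alpha,\beta]$ be a compact interval with $\alpha<\beta$ and $\Omega^\circ=(\alpha,\beta)$. An $\Omega$-tropical series is a function $F:\Omega\to[0,\infty)$ with $F(\alpha)=F(\beta)=0$ that can be written as $F(z)=\inf_{v\in\mathbb{Z}}(a_v+zv)$ for some real numbers $a_v$. Its canonical coefficients are the smallest possible such coefficients, namely $a_v=\sup_{z\in\Omega}(F(z)-zv)$. The function $0_\Omega$ is the $\Omega$-tropical series identically equal to $0$ on $\Omega$. For $p\in\Omega^\circ$ the operator $G_p$ on $\Omega$-tropical series is defined as follows: if $F$ is not differentiable at $p$, then $G_pF=F$; otherwise there is a unique $w\in\mathbb{Z}$ with $F(z)=a_w+zw$ for $z$ in a neighbourhood of $p$ (where $a_v$ are the canonical coefficients of $F$), and $G_pF(z)=\inf_{v\in\mathbb{Z}}(b_v+zv)$ for $z\in\Omega$, where $b_v=a_v$ for $v\neq w$ and $b_w=\min_{v\in\mathbb{Z}\setminus\{w\}}(a_v+pv)-pw$. *)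

theory Defs
  imports "HOL-Analysis.Analysis"
begin

text \<open>An \<open>\<Omega>\<close>-tropical series on \<open>\<Omega> = [\<alpha>,\<beta>]\<close>. Functions are of type real => real;
  only their values on \<open>{\<alpha>..\<beta>}\<close> are relevant.\<close>
definition tropical_series :: "real \<Rightarrow> real \<Rightarrow> (real \<Rightarrow> real) \<Rightarrow> bool" where
  "tropical_series \<alpha> \<beta> F \<longleftrightarrow>
     (\<forall>z\<in>{\<alpha>..\<beta>}. F z \<ge> 0) \<and> F \<alpha> = 0 \<and> F \<beta> = 0 \<and>
     (\<exists>a :: int \<Rightarrow> real. \<forall>z\<in>{\<alpha>..\<beta>}.
        bdd_below (range (\<lambda>v. a v + z * of_int v)) \<and> F z = (INF v. a v + z * of_int v))"

definition canon_coeff :: "real \<Rightarrow> real \<Rightarrow> (real \<Rightarrow> real) \<Rightarrow> int \<Rightarrow> real" where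
  "canon_coeff \<alpha> \<beta> F v = (SUP z\<in>{\<alpha>..\<beta>}. F z - z * of_int v)"

definition local_slope :: "real \<Rightarrow> real \<Rightarrow> (real \<Rightarrow> real) \<Rightarrow> real \<Rightarrow> int" where
  "local_slope \<alpha> \<beta> F p = (THE w. \<exists>e>0. \<forall>z. \<bar>z - p\<bar> < e \<longrightarrow>
        F z = canon_coeff \<alpha> \<beta> F w + z * of_int w)"

definition G_op :: "real \<Rightarrow> real \<Rightarrow> real \<Rightarrow> (real \<Rightarrow> real) \<Rightarrow> (real \<Rightarrow> real)" where
  "G_op \<alpha> \<beta> p F =
    (if \<not> F differentiable (at p) then F
     else (let a = canon_coeff \<alpha> \<beta> F;
               w = local_slope \<alpha> \<beta> F p;
               b = (\<lambda>v. if v = w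
                         then (INF u\<in>UNIV - {w}. a u + p * of_int u) - p * of_int w
                         else a v)
           in (\<lambda>z. INF v. b v + z * of_int v)))"

fun relax :: "real \<Rightarrow> real \<Rightarrow> (nat \<Rightarrow> real) \<Rightarrow> (nat \<Rightarrow> nat) \<Rightarrow> nat \<Rightarrow> (real \<Rightarrow> real)" where
  "relax \<alpha> \<beta> p k 0 = (\<lambda>_. 0)"
| "relax \<alpha> \<beta> p k (Suc m) = G_op \<alpha> \<beta> (p (k (Suc m))) (relax \<alpha> \<beta> p k m)"

end

theory Submission
  imports Defs
begin

definition ramp :: "real \<Rightarrow> real" where "ramp x = max 0 x"
definition supp :: "(real \<Rightarrow> int) \<Rightarrow> real set" where "supp \<mu> = {u. \<mu> u \<noteq> 0}"
definition Phi :: "(real \<Rightarrow> int) \<Rightarrow> real \<Rightarrow> real" where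
  "Phi \<mu> z = - (\<Sum>u\<in>supp \<mu>. of_int (\<mu> u) * ramp (z - u))"
definition SLi :: "(real \<Rightarrow> int) \<Rightarrow> real \<Rightarrow> int" where
  "SLi \<mu> x = - (\<Sum>u\<in>supp \<mu>. if u < x then \<mu> u else 0)"
definition SRi :: "(real \<Rightarrow> int) \<Rightarrow> real \<Rightarrow> int" where
  "SRi \<mu> x = - (\<Sum>u\<in>supp \<mu>. if u \<le> x then \<mu> u else 0)"

lemma SLi_real: "real_of_int (SLi \<mu> x) = - (\<Sum>u\<in>supp \<mu>. if u < x then real_of_int (\<mu> u) else 0)"
  unfolding SLi_def by (simp add: of_int_sum if_distrib cong: if_cong)
lemma SRi_real: "real_of_int (SRi \<mu> x) = - (\<Sum>u\<in>supp \<mu>. if u \<le> x then real_of_int (\<mu> u) else 0)"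
  unfolding SRi_def by (simp add: of_int_sum if_distrib cong: if_cong)

lemma SLi_SRi: "finite (supp \<mu>) \<Longrightarrow> SLi \<mu> x = SRi \<mu> x + \<mu> x"
proof -
  assume fin: "finite (supp \<mu>)"
  have "(\<Sum>u\<in>supp \<mu>. if u \<le> x then \<mu> u else 0) = (\<Sum>u\<in>supp \<mu>. (if u < x then \<mu> u else 0) + (if u = x then \<mu> u else 0))"
    by (rule sum.cong) auto
  also have "\<dots> = (\<Sum>u\<in>supp \<mu>. if u < x then \<mu> u else 0) + \<mu> x"
    using fin by (simp add: sum.distrib supp_def)
  finally show ?thesis unfolding SLi_def SRi_def by simp
qed

lemma sum_supp: "finite T \<Longrightarrow> supp \<mu> \<subseteq> T \<Longrightarrow> (\<And>u. u \<in> T \<Longrightarrow> \<mu> u = 0 \<Longrightarrow> g u = 0) \<Longrightarrow> sum g (supp \<mu>) = sum g T"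
  by (rule sum.mono_neutral_left) (auto simp: supp_def)

definition add :: "real \<Rightarrow> int \<Rightarrow> (real \<Rightarrow> int) \<Rightarrow> (real \<Rightarrow> int)" where
  "add x c \<mu> = \<mu>(x := \<mu> x + c)"

lemma supp_add: "supp (add x c \<mu>) \<subseteq> insert x (supp \<mu>)"
  by (auto simp: supp_def add_def)

lemma finite_supp_add: "finite (supp \<mu>) \<Longrightarrow> finite (supp (add x c \<mu>))"
  by (rule finite_subset[OF supp_add]) simp

lemma Phi_add: assumes fin: "finite (supp \<mu>)"
  shows "Phi (add x c \<mu>) z = Phi \<mu> z - of_int c * ramp (z - x)"
proof -
  let ?T = "insert x (supp \<mu>)"
  have "Phi (add x c \<mu>) z = - (\<Sum>u\<in>?T. of_int (add x c \<mu> u) * ramp (z - u))"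
    unfolding Phi_def using fin supp_add by (subst sum_supp[where T="?T"]) auto
  also have "\<dots> = - (\<Sum>u\<in>?T. of_int (\<mu> u) * ramp (z - u) + (if u = x then of_int c * ramp (z - x) else 0))"
    by (intro arg_cong[where f=uminus] sum.cong) (auto simp: add_def algebra_simps)
  also have "\<dots> = - ((\<Sum>u\<in>?T. of_int (\<mu> u) * ramp (z - u)) + of_int c * ramp (z - x))"
    using fin by (simp add: sum.distrib)
  also have "(\<Sum>u\<in>?T. of_int (\<mu> u) * ramp (z - u)) = - Phi \<mu> z"
    unfolding Phi_def using fin by (subst sum_supp[where T="?T"]) auto
  finally show ?thesis by simp
qed

lemma SLi_add: assumes fin: "finite (supp \<mu>)"
  shows "SLi (add x c \<mu>) y = SLi \<mu> y - (if x < y then c else 0)"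
proof -
  let ?T = "insert x (supp \<mu>)"
  have "SLi (add x c \<mu>) y = - (\<Sum>u\<in>?T. if u < y then add x c \<mu> u else 0)"
    unfolding SLi_def using fin supp_add by (subst sum_supp[where T="?T"]) auto
  also have "\<dots> = - (\<Sum>u\<in>?T. (if u < y then \<mu> u else 0) + (if u = x then (if x < y then c else 0) else 0))"
    by (intro arg_cong[where f=uminus] sum.cong) (auto simp: add_def)
  also have "\<dots> = - ((\<Sum>u\<in>?T. if u < y then \<mu> u else 0) + (if x < y then c else 0))"
    using fin by (simp add: sum.distrib)
  also have "(\<Sum>u\<in>?T. if u < y then \<mu> u else 0) = - SLi \<mu> y"
    unfolding SLi_def using fin by (subst sum_supp[where T="?T"]) auto
  finally show ?thesis by simp
qed

locale trop =
  fixes a b :: real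
  assumes ab: "a < b"
begin

definition nonneg :: "(real \<Rightarrow> int) \<Rightarrow> bool" where
  "nonneg \<mu> \<longleftrightarrow> finite (supp \<mu>) \<and> (\<forall>u. a < u \<and> u < b \<longrightarrow> \<mu> u \<ge> 0)"

lemma L1:
  assumes nn: "nonneg \<mu>" and "a \<le> x" "x \<le> y" "y \<le> b"
  shows "Phi \<mu> y - Phi \<mu> x \<le> of_int (SRi \<mu> x) * (y - x)"
proof -
  have "Phi \<mu> y - Phi \<mu> x - of_int (SRi \<mu> x) * (y - x) =
     (\<Sum>u\<in>supp \<mu>. of_int (\<mu> u) * ((if u \<le> x then y - x else 0) - ramp (y - u) + ramp (x - u)))"
  proof -
    have "(\<Sum>u\<in>supp \<mu>. of_int (\<mu> u) * ((if u \<le> x then y - x else 0) - ramp (y - u) + ramp (x - u)))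
       = (\<Sum>u\<in>supp \<mu>. of_int (\<mu> u) * ramp (x - u) - of_int (\<mu> u) * ramp (y - u) + (if u \<le> x then real_of_int (\<mu> u) else 0) * (y - x))"
      by (rule sum.cong) (auto simp: algebra_simps)
    also have "\<dots> = (\<Sum>u\<in>supp \<mu>. of_int (\<mu> u) * ramp (x - u)) - (\<Sum>u\<in>supp \<mu>. of_int (\<mu> u) * ramp (y - u)) + (\<Sum>u\<in>supp \<mu>. (if u \<le> x then real_of_int (\<mu> u) else 0)) * (y - x)"
      by (simp only: sum.distrib sum_subtractf sum_distrib_right)
    finally show ?thesis unfolding Phi_def SRi_real by simp
  qed
  also have "\<dots> \<le> 0"
  proof (rule sum_nonpos)
    fix u assume "u \<in> supp \<mu>"
    show "of_int (\<mu> u) * ((if u \<le> x then y - x else 0) - ramp (y - u) + ramp (x - u)) \<le> 0"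
    proof (cases "u \<le> x")
      case True thus ?thesis using assms by (simp add: ramp_def)
    next
      case False
      show ?thesis
      proof (cases "u < b")
        case True
        hence "\<mu> u \<ge> 0" using nn False assms unfolding nonneg_def by auto
        thus ?thesis using False by (simp add: ramp_def mult_nonneg_nonneg)
      next
        case False
        thus ?thesis using assms \<open>\<not> u \<le> x\<close> by (simp add: ramp_def)
      qed
    qed
  qed
  finally show ?thesis by simp
qed

lemma L2:
  assumes nn: "nonneg \<mu>" and "a \<le> y" "y \<le> x" "x \<le> b"
  shows "Phi \<mu> x - Phi \<mu> y \<ge> of_int (SLi \<mu> x) * (x - y)"
proof -
  have eq: "Phi \<mu> x - Phi \<mu> y - of_int (SLi \<mu> x) * (x - y) =
     (\<Sum>u\<in>supp \<mu>. of_int (\<mu> u) * ((if u < x then x - y else 0) - ramp (x - u) + ramp (y - u)))"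
  proof -
    have "(\<Sum>u\<in>supp \<mu>. of_int (\<mu> u) * ((if u < x then x - y else 0) - ramp (x - u) + ramp (y - u)))
       = (\<Sum>u\<in>supp \<mu>. of_int (\<mu> u) * ramp (y - u) - of_int (\<mu> u) * ramp (x - u) + (if u < x then real_of_int (\<mu> u) else 0) * (x - y))"
      by (rule sum.cong) (auto simp: algebra_simps)
    also have "\<dots> = (\<Sum>u\<in>supp \<mu>. of_int (\<mu> u) * ramp (y - u)) - (\<Sum>u\<in>supp \<mu>. of_int (\<mu> u) * ramp (x - u)) + (\<Sum>u\<in>supp \<mu>. (if u < x then real_of_int (\<mu> u) else 0)) * (x - y)"
      by (simp only: sum.distrib sum_subtractf sum_distrib_right)
    finally show ?thesis unfolding Phi_def SLi_real by simp
  qed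
  have "(\<Sum>u\<in>supp \<mu>. of_int (\<mu> u) * ((if u < x then x - y else 0) - ramp (x - u) + ramp (y - u))) \<ge> 0"
  proof (rule sum_nonneg)
    fix u assume "u \<in> supp \<mu>"
    show "of_int (\<mu> u) * ((if u < x then x - y else 0) - ramp (x - u) + ramp (y - u)) \<ge> 0"
    proof (cases "u \<le> y")
      case True
      have r: "ramp (x-u) = x-u" "ramp (y-u) = y-u" using True assms by (simp_all add: ramp_def)
      have "(if u < x then x - y else 0) - ramp (x - u) + ramp (y - u) = 0"
        using True assms r by (cases "u < x") auto
      thus ?thesis by simp
    next
      case False
      show ?thesis
      proof (cases "u < x")
        case True
        hence "\<mu> u \<ge> 0" using nn False assms unfolding nonneg_def by auto
        moreover have "ramp (x-u) = x-u" "ramp (y-u) = 0" using True False by (simp_all add: ramp_def)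
        ultimately show ?thesis using False True by simp
      next
        case F2: False
        have "ramp (x-u) = 0" "ramp (y-u) = 0" using F2 False assms by (simp_all add: ramp_def)
        thus ?thesis using F2 by simp
      qed
    qed
  qed
  thus ?thesis using eq by linarith
qed

end


lemma add_apply: "add x c \<mu> u = \<mu> u + (if u = x then c else 0)"
  by (simp add: add_def)

lemma HH:
  assumes "l < p" "p < r"
  shows "ramp (z-l) + ramp (z-r) - ramp (z-p) - ramp (z-(l+r-p)) = max 0 (min (z-l) (min (min (p-l) (r-p)) (r-z)))"
  using assms unfolding ramp_def by (auto simp: max_def min_def)

context trop begin

definition lft :: "(real \<Rightarrow> int) \<Rightarrow> real \<Rightarrow> real" where
  "lft \<mu> p = Max (insert a {u. a < u \<and> u < p \<and> \<mu> u > 0})"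
definition rgt :: "(real \<Rightarrow> int) \<Rightarrow> real \<Rightarrow> real" where
  "rgt \<mu> p = Min (insert b {u. p < u \<and> u < b \<and> \<mu> u > 0})"
definition dd :: "(real \<Rightarrow> int) \<Rightarrow> real \<Rightarrow> real" where
  "dd \<mu> p = min (p - lft \<mu> p) (rgt \<mu> p - p)"
definition mv :: "(real \<Rightarrow> int) \<Rightarrow> real \<Rightarrow> (real \<Rightarrow> int)" where
  "mv \<mu> p = (if \<mu> p \<noteq> 0 then \<mu> else
     add (rgt \<mu> p) (-1) (add (lft \<mu> p) (-1) (add (lft \<mu> p + rgt \<mu> p - p) 1 (add p 1 \<mu>))))"

lemma gap:
  assumes nn: "nonneg \<mu>" and p: "a < p" "p < b" and p0: "\<mu> p = 0"
  shows "a \<le> lft \<mu> p" "lft \<mu> p < p" "p < rgt \<mu> p" "rgt \<mu> p \<le> b"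
    "a < lft \<mu> p \<Longrightarrow> \<mu> (lft \<mu> p) > 0" "rgt \<mu> p < b \<Longrightarrow> \<mu> (rgt \<mu> p) > 0"
    "\<And>u. \<mu> u \<noteq> 0 \<Longrightarrow> u \<le> lft \<mu> p \<or> rgt \<mu> p \<le> u"
proof -
  have fin: "finite (supp \<mu>)" using nn by (simp add: nonneg_def)
  let ?L = "{u. a < u \<and> u < p \<and> \<mu> u > 0}"
  let ?R = "{u. p < u \<and> u < b \<and> \<mu> u > 0}"
  have fL: "finite ?L" by (rule finite_subset[OF _ fin]) (auto simp: supp_def)
  have fR: "finite ?R" by (rule finite_subset[OF _ fin]) (auto simp: supp_def)
  have lin: "lft \<mu> p \<in> insert a ?L" unfolding lft_def using fL by (intro Max_in) auto
  have rin: "rgt \<mu> p \<in> insert b ?R" unfolding rgt_def using fR by (intro Min_in) auto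
  have lge: "\<And>u. u \<in> ?L \<Longrightarrow> u \<le> lft \<mu> p" unfolding lft_def using fL by auto
  have rle: "\<And>u. u \<in> ?R \<Longrightarrow> rgt \<mu> p \<le> u" unfolding rgt_def using fR by auto
  show "a \<le> lft \<mu> p" unfolding lft_def using fL by auto
  show "rgt \<mu> p \<le> b" unfolding rgt_def using fR by auto
  show "lft \<mu> p < p" using lin p by auto
  show "p < rgt \<mu> p" using rin p by auto
  show "a < lft \<mu> p \<Longrightarrow> \<mu> (lft \<mu> p) > 0" using lin by auto
  show "rgt \<mu> p < b \<Longrightarrow> \<mu> (rgt \<mu> p) > 0" using rin by auto
  fix u assume u: "\<mu> u \<noteq> 0"
  show "u \<le> lft \<mu> p \<or> rgt \<mu> p \<le> u"
  proof (rule ccontr)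
    assume c: "\<not> (u \<le> lft \<mu> p \<or> rgt \<mu> p \<le> u)"
    have "a \<le> lft \<mu> p" "rgt \<mu> p \<le> b" unfolding lft_def rgt_def using fL fR by auto
    with c have ab': "a < u" "u < b" by auto
    with nn u have pos: "\<mu> u > 0" unfolding nonneg_def by force
    show False
    proof (cases "u < p")
      case True thus False using lge[of u] pos ab' c by auto
    next
      case False
      hence "p < u" using u p0 by (cases "u = p") auto
      thus False using rle[of u] pos ab' c by auto
    qed
  qed
qed

lemma Lin:
  assumes fin: "finite (supp \<mu>)" and sep: "\<And>u. \<mu> u \<noteq> 0 \<Longrightarrow> u \<le> l \<or> r \<le> u"
    and "l < p" "p \<le> r" "l \<le> z" "z \<le> r"
  shows "Phi \<mu> z = Phi \<mu> p + of_int (SLi \<mu> p) * (z - p)"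
proof -
  have "Phi \<mu> z - Phi \<mu> p - of_int (SLi \<mu> p) * (z - p) =
     (\<Sum>u\<in>supp \<mu>. of_int (\<mu> u) * ((if u < p then z - p else 0) - ramp (z - u) + ramp (p - u)))"
  proof -
    have "(\<Sum>u\<in>supp \<mu>. of_int (\<mu> u) * ((if u < p then z - p else 0) - ramp (z - u) + ramp (p - u)))
       = (\<Sum>u\<in>supp \<mu>. of_int (\<mu> u) * ramp (p - u) - of_int (\<mu> u) * ramp (z - u) + (if u < p then real_of_int (\<mu> u) else 0) * (z - p))"
      by (rule sum.cong) (auto simp: algebra_simps)
    also have "\<dots> = (\<Sum>u\<in>supp \<mu>. of_int (\<mu> u) * ramp (p - u)) - (\<Sum>u\<in>supp \<mu>. of_int (\<mu> u) * ramp (z - u)) + (\<Sum>u\<in>supp \<mu>. (if u < p then real_of_int (\<mu> u) else 0)) * (z - p)"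
      by (simp only: sum.distrib sum_subtractf sum_distrib_right)
    finally show ?thesis unfolding Phi_def SLi_real by simp
  qed
  also have "\<dots> = 0"
  proof (rule sum.neutral, rule ballI)
    fix u assume "u \<in> supp \<mu>"
    hence "u \<le> l \<or> r \<le> u" using sep by (auto simp: supp_def)
    thus "of_int (\<mu> u) * ((if u < p then z - p else 0) - ramp (z - u) + ramp (p - u)) = 0"
    proof
      assume "u \<le> l"
      hence "ramp (z - u) = z - u" "ramp (p - u) = p - u" "u < p" using assms by (auto simp: ramp_def)
      thus ?thesis by simp
    next
      assume "r \<le> u"
      hence "ramp (z - u) = 0" "ramp (p - u) = 0" "\<not> u < p" using assms by (auto simp: ramp_def)
      thus ?thesis by simp
    qed
  qed
  finally show ?thesis by simp
qed

lemma SRi_diff: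
  assumes fin: "finite (supp \<mu>)" and "z < p"
  shows "SRi \<mu> z = SLi \<mu> p + (\<Sum>u\<in>supp \<mu>. if z < u \<and> u < p then \<mu> u else 0)"
proof -
  have "(\<Sum>u\<in>supp \<mu>. if u < p then \<mu> u else 0) = (\<Sum>u\<in>supp \<mu>. (if u \<le> z then \<mu> u else 0) + (if z < u \<and> u < p then \<mu> u else 0))"
    by (rule sum.cong) (use assms in auto)
  thus ?thesis unfolding SLi_def SRi_def by (simp add: sum.distrib)
qed

lemma SLi_diff:
  assumes fin: "finite (supp \<mu>)" and "p < z"
  shows "SLi \<mu> p = SLi \<mu> z + (\<Sum>u\<in>supp \<mu>. if p \<le> u \<and> u < z then \<mu> u else 0)"
proof -
  have "(\<Sum>u\<in>supp \<mu>. if u < z then \<mu> u else 0) = (\<Sum>u\<in>supp \<mu>. (if u < p then \<mu> u else 0) + (if p \<le> u \<and> u < z then \<mu> u else 0))"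
    by (rule sum.cong) (use assms in auto)
  thus ?thesis unfolding SLi_def SRi_def by (simp add: sum.distrib)
qed

lemma sum_ge_term:
  assumes nn: "nonneg \<mu>" and "a \<le> s" "t \<le> b" "s < x" "x < t"
  shows "\<mu> x \<le> (\<Sum>u\<in>supp \<mu>. if s < u \<and> u < t then \<mu> u else 0)"
proof (cases "\<mu> x = 0")
  case True
  have "0 \<le> (\<Sum>u\<in>supp \<mu>. if s < u \<and> u < t then \<mu> u else 0)"
    using nn assms unfolding nonneg_def by (intro sum_nonneg) auto
  thus ?thesis using True by simp
next
  case False
  hence "x \<in> supp \<mu>" by (simp add: supp_def)
  moreover have "finite (supp \<mu>)" using nn by (simp add: nonneg_def)
  ultimately have "(if s < x \<and> x < t then \<mu> x else 0) \<le> (\<Sum>u\<in>supp \<mu>. if s < u \<and> u < t then \<mu> u else 0)"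
    using nn assms unfolding nonneg_def by (intro member_le_sum) auto
  thus ?thesis using assms by simp
qed

lemma Sup_line:
  assumes nn: "nonneg \<mu>" and x: "a \<le> x" "x \<le> b"
    and v1: "x < b \<Longrightarrow> of_int (SRi \<mu> x) \<le> v" and v2: "a < x \<Longrightarrow> v \<le> of_int (SLi \<mu> x)"
    and y: "a \<le> y" "y \<le> b"
  shows "Phi \<mu> y \<le> Phi \<mu> x + v * (y - x)"
proof (cases "x \<le> y")
  case True
  show ?thesis
  proof (cases "x = y")
    case False
    hence "x < b" using True y by auto
    have "Phi \<mu> y - Phi \<mu> x \<le> of_int (SRi \<mu> x) * (y - x)" using L1[OF nn x(1) True y(2)] .
    also have "\<dots> \<le> v * (y - x)" using v1[OF \<open>x < b\<close>] True by (intro mult_right_mono) auto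
    finally show ?thesis by simp
  qed simp
next
  case False
  hence "a < x" using y by auto
  have "Phi \<mu> x - Phi \<mu> y \<ge> of_int (SLi \<mu> x) * (x - y)" using L2[OF nn y(1) _ x(2)] False by auto
  moreover have "v * (x - y) \<le> of_int (SLi \<mu> x) * (x - y)" using v2[OF \<open>a < x\<close>] False by (intro mult_right_mono) auto
  ultimately show ?thesis by (simp add: algebra_simps)
qed

lemma Phi_cont: "continuous_on S (Phi \<mu>)"
  unfolding Phi_def[abs_def] ramp_def by (intro continuous_intros)

lemma canon_eq:
  assumes F: "\<forall>z\<in>{a..b}. F z = Phi \<mu> z"
  shows "canon_coeff a b F v = (SUP z\<in>{a..b}. Phi \<mu> z - z * of_int v)"
  unfolding canon_coeff_def using F by (intro SUP_cong) auto

lemma canon_ge: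
  assumes F: "\<forall>z\<in>{a..b}. F z = Phi \<mu> z" and y: "a \<le> y" "y \<le> b"
  shows "Phi \<mu> y - y * of_int v \<le> canon_coeff a b F v"
proof -
  have "compact ((\<lambda>z. Phi \<mu> z - z * of_int v) ` {a..b})"
    by (intro compact_continuous_image continuous_intros Phi_cont) auto
  hence "bdd_above ((\<lambda>z. Phi \<mu> z - z * of_int v) ` {a..b})"
    by (intro bounded_imp_bdd_above compact_imp_bounded)
  thus ?thesis unfolding canon_eq[OF F] using y by (intro cSUP_upper) auto
qed

lemma canon_at:
  assumes F: "\<forall>z\<in>{a..b}. F z = Phi \<mu> z" and x: "a \<le> x" "x \<le> b"
    and sup: "\<And>y. a \<le> y \<Longrightarrow> y \<le> b \<Longrightarrow> Phi \<mu> y \<le> Phi \<mu> x + of_int v * (y - x)"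
  shows "canon_coeff a b F v = Phi \<mu> x - x * of_int v"
  unfolding canon_eq[OF F]
proof (rule cSup_eq_maximum)
  show "Phi \<mu> x - x * of_int v \<in> (\<lambda>z. Phi \<mu> z - z * of_int v) ` {a..b}" using x by auto
  fix t assume "t \<in> (\<lambda>z. Phi \<mu> z - z * of_int v) ` {a..b}"
  then obtain y where "a \<le> y" "y \<le> b" "t = Phi \<mu> y - y * of_int v" by auto
  thus "t \<le> Phi \<mu> x - x * of_int v" using sup[of y] by (simp add: algebra_simps)
qed

end


context trop begin

lemma nondiff:
  assumes nn: "nonneg \<mu>" and p: "a < p" "p < b" and pos: "\<mu> p > 0"
    and F: "\<forall>z\<in>{a..b}. F z = Phi \<mu> z"
  shows "\<not> F differentiable at p"
proof
  assume "F differentiable at p"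
  hence D: "(F has_real_derivative deriv F p) (at p)" by (simp add: DERIV_deriv_iff_real_differentiable)
  have fin: "finite (supp \<mu>)" using nn by (simp add: nonneg_def)
  have R: "((\<lambda>y. (F y - F p) / (y - p)) \<longlongrightarrow> deriv F p) (at_right p)"
    using has_field_derivative_at_within[OF D, of "{p<..}"] by (simp add: has_field_derivative_iff)
  have L: "((\<lambda>y. (F y - F p) / (y - p)) \<longlongrightarrow> deriv F p) (at_left p)"
    using has_field_derivative_at_within[OF D, of "{..<p}"] by (simp add: has_field_derivative_iff)
  have evR: "\<forall>\<^sub>F y in at_right p. (F y - F p) / (y - p) \<le> of_int (SRi \<mu> p)"
    unfolding eventually_at_right_field
  proof (intro exI[of _ b] conjI allI impI)
    show "p < b" using p by simp
    fix y assume y: "p < y" "y < b"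
    have "Phi \<mu> y - Phi \<mu> p \<le> of_int (SRi \<mu> p) * (y - p)" using L1[OF nn _ _ ] p y by auto
    moreover have "F y = Phi \<mu> y" "F p = Phi \<mu> p" using F p y by auto
    ultimately show "(F y - F p) / (y - p) \<le> of_int (SRi \<mu> p)" using y by (simp add: pos_divide_le_eq)
  qed
  have evL: "\<forall>\<^sub>F y in at_left p. of_int (SLi \<mu> p) \<le> (F y - F p) / (y - p)"
    unfolding eventually_at_left_field
  proof (intro exI[of _ a] conjI allI impI)
    show "a < p" using p by simp
    fix y assume y: "a < y" "y < p"
    have "Phi \<mu> p - Phi \<mu> y \<ge> of_int (SLi \<mu> p) * (p - y)" using L2[OF nn _ _ ] p y by auto
    moreover have "F y = Phi \<mu> y" "F p = Phi \<mu> p" using F p y by auto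
    moreover have "(F y - F p) / (y - p) = (F p - F y) / (p - y)"
      by (metis minus_diff_eq minus_divide_divide)
    ultimately show "of_int (SLi \<mu> p) \<le> (F y - F p) / (y - p)" using y by (simp add: pos_le_divide_eq)
  qed
  have "deriv F p \<le> of_int (SRi \<mu> p)" by (rule tendsto_upperbound[OF R evR trivial_limit_at_right_real])
  moreover have "of_int (SLi \<mu> p) \<le> deriv F p" by (rule tendsto_lowerbound[OF L evL trivial_limit_at_left_real])
  moreover have "SLi \<mu> p = SRi \<mu> p + \<mu> p" using SLi_SRi[OF fin] .
  ultimately show False using pos by linarith
qed

lemma mv_apply:
  "mv \<mu> p u = (if \<mu> p \<noteq> 0 then \<mu> u else
     \<mu> u + (if u = p then 1 else 0) + (if u = lft \<mu> p + rgt \<mu> p - p then 1 else 0)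
       - (if u = lft \<mu> p then 1 else 0) - (if u = rgt \<mu> p then 1 else 0))"
  by (simp add: mv_def add_apply)

lemma Phi_mv:
  assumes nn: "nonneg \<mu>" and p: "a < p" "p < b" and p0: "\<mu> p = 0"
  shows "Phi (mv \<mu> p) z = Phi \<mu> z + max 0 (min (z - lft \<mu> p) (min (dd \<mu> p) (rgt \<mu> p - z)))"
proof -
  have fin: "finite (supp \<mu>)" using nn by (simp add: nonneg_def)
  note g = gap[OF nn p p0]
  let ?l = "lft \<mu> p" and ?r = "rgt \<mu> p"
  have "Phi (mv \<mu> p) z = Phi \<mu> z - ramp (z - p) - ramp (z - (?l + ?r - p)) + ramp (z - ?l) + ramp (z - ?r)"
    using p0 fin by (simp add: mv_def Phi_add finite_supp_add)
  also have "\<dots> = Phi \<mu> z + (ramp (z-?l) + ramp (z-?r) - ramp (z-p) - ramp (z-(?l+?r-p)))" by simp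
  also have "\<dots> = Phi \<mu> z + max 0 (min (z - ?l) (min (dd \<mu> p) (?r - z)))"
    using HH[OF g(2) g(3), of z] by (simp add: dd_def)
  finally show ?thesis .
qed

lemma nonneg_mv:
  assumes nn: "nonneg \<mu>" and p: "a < p" "p < b"
  shows "nonneg (mv \<mu> p)"
proof (cases "\<mu> p = 0")
  case False thus ?thesis using nn by (simp add: mv_def)
next
  case p0: True
  note g = gap[OF nn p p0]
  have fin: "finite (supp \<mu>)" using nn by (simp add: nonneg_def)
  have "finite (supp (mv \<mu> p))" using fin p0 by (simp add: mv_def finite_supp_add)
  moreover have "\<mu> u \<ge> 0 \<Longrightarrow> 0 \<le> mv \<mu> p u" if u: "a < u" "u < b" for u
  proof -
    have A: "u = lft \<mu> p \<Longrightarrow> \<mu> u \<ge> 1" using g(5) u by auto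
    have B: "u = rgt \<mu> p \<Longrightarrow> \<mu> u \<ge> 1" using g(6) u by auto
    have C: "lft \<mu> p \<noteq> rgt \<mu> p" using g by auto
    assume "\<mu> u \<ge> 0"
    thus ?thesis unfolding mv_apply using A B C p0 by auto
  qed
  ultimately show ?thesis using nn unfolding nonneg_def by auto
qed

lemma G_step:
  assumes nn: "nonneg \<mu>" and p: "a < p" "p < b" and F: "\<forall>z\<in>{a..b}. F z = Phi \<mu> z"
  shows "\<forall>z\<in>{a..b}. G_op a b p F z = Phi (mv \<mu> p) z"
proof (cases "\<mu> p = 0")
  case False
  hence "\<mu> p > 0" using nn p unfolding nonneg_def by force
  hence "\<not> F differentiable at p" using nondiff[OF nn p _ F] by simp
  thus ?thesis using F False by (simp add: G_op_def mv_def)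
next
  case p0: True
  note g = gap[OF nn p p0]
  have fin: "finite (supp \<mu>)" using nn by (simp add: nonneg_def)
  define l where "l = lft \<mu> p"
  define r where "r = rgt \<mu> p"
  define w where "w = SLi \<mu> p"
  define d where "d = dd \<mu> p"
  have d': "d = min (p - l) (r - p)" by (simp add: d_def dd_def l_def r_def)
  have lp: "a \<le> l" "l < p" "p < r" "r \<le> b" using g by (auto simp: l_def r_def)
  have sep: "\<And>u. \<mu> u \<noteq> 0 \<Longrightarrow> u \<le> l \<or> r \<le> u" using g(7) by (simp add: l_def r_def)
  have lin: "\<And>z. l \<le> z \<Longrightarrow> z \<le> r \<Longrightarrow> Phi \<mu> z = Phi \<mu> p + of_int w * (z - p)"
    unfolding w_def by (rule Lin[OF fin sep]) (use lp in auto)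
  have SRp: "SRi \<mu> p = w" using SLi_SRi[OF fin, of p] p0 by (simp add: w_def)
  have SRl: "SRi \<mu> l = w"
  proof -
    have "(\<Sum>u\<in>supp \<mu>. if l < u \<and> u < p then \<mu> u else 0) = 0"
      by (rule sum.neutral) (use sep lp in \<open>force simp: supp_def\<close>)
    thus ?thesis using SRi_diff[OF fin lp(2)] by (simp add: w_def)
  qed
  have SLr: "SLi \<mu> r = w"
  proof -
    have "(\<Sum>u\<in>supp \<mu>. if p \<le> u \<and> u < r then \<mu> u else 0) = 0"
    proof (rule sum.neutral, rule ballI)
      fix u assume u: "u \<in> supp \<mu>"
      hence "u \<noteq> p" using p0 by (auto simp: supp_def)
      thus "(if p \<le> u \<and> u < r then \<mu> u else 0) = 0" using sep[of u] u lp by (auto simp: supp_def)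
    qed
    thus ?thesis using SLi_diff[OF fin lp(3)] by (simp add: w_def)
  qed
  have lpos: "a < l \<Longrightarrow> \<mu> l \<ge> 1" using g(5) by (simp add: l_def)
  have rpos: "r < b \<Longrightarrow> \<mu> r \<ge> 1" using g(6) by (simp add: r_def)
  have SLl: "a < l \<Longrightarrow> SLi \<mu> l \<ge> w + 1" using SLi_SRi[OF fin, of l] SRl lpos by simp
  have SRr: "r < b \<Longrightarrow> SRi \<mu> r \<le> w - 1" using SLi_SRi[OF fin, of r] SLr rpos by simp
  define A where "A = canon_coeff a b F"
  have Age: "\<And>v y. a \<le> y \<Longrightarrow> y \<le> b \<Longrightarrow> Phi \<mu> y - y * of_int v \<le> A v"
    unfolding A_def using canon_ge[OF F] by blast
  have Aw: "A w = Phi \<mu> p - p * of_int w"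
    unfolding A_def
  proof (rule canon_at[OF F])
    fix y assume y: "a \<le> y" "y \<le> b"
    show "Phi \<mu> y \<le> Phi \<mu> p + of_int w * (y - p)"
    proof (rule Sup_line[OF nn])
      show "of_int (SRi \<mu> p) \<le> real_of_int w" using SRp by simp
      show "real_of_int w \<le> of_int (SLi \<mu> p)" by (simp add: w_def)
    qed (use p y in simp_all)
  qed (use p in simp_all)
  have Al: "A (w+1) = Phi \<mu> l - l * of_int (w+1)"
    unfolding A_def
  proof (rule canon_at[OF F])
    fix y assume y: "a \<le> y" "y \<le> b"
    show "Phi \<mu> y \<le> Phi \<mu> l + of_int (w+1) * (y - l)"
    proof (rule Sup_line[OF nn])
      show "of_int (SRi \<mu> l) \<le> real_of_int (w+1)" using SRl by simp
      show "real_of_int (w+1) \<le> of_int (SLi \<mu> l)" if "a < l"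
        using SLl[OF that] by (simp only: of_int_le_iff)
    qed (use lp y in simp_all)
  qed (use lp in simp_all)
  have Ar: "A (w-1) = Phi \<mu> r - r * of_int (w-1)"
    unfolding A_def
  proof (rule canon_at[OF F])
    fix y assume y: "a \<le> y" "y \<le> b"
    show "Phi \<mu> y \<le> Phi \<mu> r + of_int (w-1) * (y - r)"
    proof (rule Sup_line[OF nn])
      show "of_int (SRi \<mu> r) \<le> real_of_int (w-1)" if "r < b"
        using SRr[OF that] by (simp only: of_int_le_iff)
      show "real_of_int (w-1) \<le> of_int (SLi \<mu> r)" using SLr by simp
    qed (use lp y in simp_all)
  qed (use lp in simp_all)
  have Phil: "Phi \<mu> l = Phi \<mu> p + of_int w * (l - p)" using lin[of l] lp by simp
  have Phir: "Phi \<mu> r = Phi \<mu> p + of_int w * (r - p)" using lin[of r] lp by simp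
  have diff: "F differentiable at p"
  proof -
    have "((\<lambda>z. Phi \<mu> p + of_int w * (z - p)) has_real_derivative of_int w) (at p)"
      by (auto intro!: derivative_eq_intros)
    hence "(F has_real_derivative of_int w) (at p)"
    proof (rule has_field_derivative_transform_within_open[where S="{l<..<r}"])
      show "open {l<..<r}" by simp
      show "p \<in> {l<..<r}" using lp by simp
      fix x assume x: "x \<in> {l<..<r}"
      hence "F x = Phi \<mu> x" using F lp by auto
      thus "Phi \<mu> p + of_int w * (x - p) = F x" using lin[of x] x by simp
    qed
    thus ?thesis by (rule differentiableI[OF has_field_derivative_imp_has_derivative])
  qed
  have ls: "local_slope a b F p = w"
    unfolding local_slope_def
  proof (rule the_equality)
    show "\<exists>e>0. \<forall>z. \<bar>z - p\<bar> < e \<longrightarrow> F z = canon_coeff a b F w + z * of_int w"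
    proof (intro exI[of _ d] conjI allI impI)
      show "0 < d" using d' lp by simp
      fix z assume "\<bar>z - p\<bar> < d"
      hence z: "l < z" "z < r" using d' by auto
      hence "F z = Phi \<mu> z" using F lp by auto
      also have "\<dots> = Phi \<mu> p + of_int w * (z - p)" using lin[of z] z by simp
      finally show "F z = canon_coeff a b F w + z * of_int w" using Aw by (simp add: A_def algebra_simps)
    qed
  next
    fix w' assume "\<exists>e>0. \<forall>z. \<bar>z - p\<bar> < e \<longrightarrow> F z = canon_coeff a b F w' + z * of_int w'"
    then obtain e where e: "e > 0" "\<And>z. \<bar>z - p\<bar> < e \<Longrightarrow> F z = canon_coeff a b F w' + z * of_int w'" by auto
    define z where "z = p + min e d / 2"
    have dpos: "d > 0" using d' lp by simp
    have m: "0 < min e d" "min e d \<le> e" "min e d \<le> d" using e dpos by auto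
    have dd': "d \<le> p - l" "d \<le> r - p" using d' by auto
    have zp: "z - p = min e d / 2" by (simp add: z_def)
    have z4: "z > p" using zp m by linarith
    have z: "\<bar>z - p\<bar> < e" "l < z" "z < r" "z > p"
      using zp m dd' z4 abs_of_pos[of "z - p"] by linarith+
    have "F z - F p = of_int w' * (z - p)" using e(2)[OF z(1)] e(2)[of p] e(1) by (simp add: algebra_simps)
    moreover have "F z - F p = of_int w * (z - p)" using F lp z lin[of z] by auto
    ultimately have "of_int w' * (z - p) = of_int w * (z - p)" by linarith
    hence "(of_int w' :: real) = of_int w" using z(4) by (simp add: mult_cancel_right)
    thus "w' = w" by simp
  qed
  have Inf1: "(INF u\<in>UNIV - {w}. A u + p * of_int u) = Phi \<mu> p + d"
  proof (rule cInf_eq_minimum)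
    show "Phi \<mu> p + d \<in> (\<lambda>u. A u + p * of_int u) ` (UNIV - {w})"
    proof (cases "p - l \<le> r - p")
      case True
      have "A (w+1) + p * of_int (w+1) = Phi \<mu> p + d" using Al Phil True d'
        by (simp add: algebra_simps)
      thus ?thesis by (intro image_eqI[of _ _ "w+1"]) auto
    next
      case False
      have "A (w-1) + p * of_int (w-1) = Phi \<mu> p + d" using Ar Phir False d'
        by (simp add: algebra_simps)
      thus ?thesis by (intro image_eqI[of _ _ "w-1"]) auto
    qed
  next
    fix t assume "t \<in> (\<lambda>u. A u + p * of_int u) ` (UNIV - {w})"
    then obtain u where u: "u \<noteq> w" "t = A u + p * of_int u" by auto
    show "Phi \<mu> p + d \<le> t"
    proof (cases "u > w")
      case True
      hence "of_int u * (p - l) \<ge> of_int (w+1) * (p - l)" using lp by (intro mult_right_mono) auto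
      moreover have "Phi \<mu> l - l * of_int u \<le> A u" using Age lp by auto
      ultimately show ?thesis using u Phil d' by (simp add: algebra_simps)
    next
      case False
      hence "u \<le> w - 1" using u by simp
      hence "of_int u * (r - p) \<le> of_int (w-1) * (r - p)" using lp by (intro mult_right_mono) auto
      moreover have "Phi \<mu> r - r * of_int u \<le> A u" using Age lp by auto
      ultimately show ?thesis using u Phir d' by (simp add: algebra_simps)
    qed
  qed
  define bb where "bb = (\<lambda>v. if v = w then (INF u\<in>UNIV - {w}. A u + p * of_int u) - p * of_int w else A v)"
  have Gz: "G_op a b p F z = (INF v. bb v + z * of_int v)" for z
    using diff unfolding G_op_def Let_def ls bb_def A_def by simp
  show ?thesis
  proof
    fix z assume z: "z \<in> {a..b}"
    define H where "H = max 0 (min (z - l) (min d (r - z)))"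
    have PM: "Phi (mv \<mu> p) z = Phi \<mu> z + H"
      using Phi_mv[OF nn p p0] by (simp add: H_def l_def r_def d_def)
    have Hle: "H \<le> d" "H \<ge> 0" using d' lp by (auto simp: H_def)
    have bbw: "bb w = Phi \<mu> p + d - p * of_int w" using Inf1 by (simp add: bb_def)
    have "(INF v. bb v + z * of_int v) = Phi \<mu> z + H"
    proof (rule cInf_eq_minimum)
      show "Phi \<mu> z + H \<in> range (\<lambda>v. bb v + z * of_int v)"
      proof (cases "l \<le> z \<and> z \<le> r")
        case True
        have Pz: "Phi \<mu> z = Phi \<mu> p + of_int w * (z - p)" using lin[of z] True by simp
        have H': "H = min (z - l) (min d (r - z))" using True d' lp by (auto simp: H_def)
        consider "H = z - l" | "H = d" | "H = r - z" using H' by linarith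
        thus ?thesis
        proof cases
          case 1
          have "bb (w+1) + z * of_int (w+1) = Phi \<mu> z + H"
            using 1 Al Phil Pz by (simp add: bb_def algebra_simps)
          thus ?thesis by (intro range_eqI[of _ _ "w+1"]) simp
        next
          case 2
          have "bb w + z * of_int w = Phi \<mu> z + H"
            using 2 bbw Pz by (simp add: algebra_simps)
          thus ?thesis by (intro range_eqI[of _ _ "w"]) simp
        next
          case 3
          have "bb (w-1) + z * of_int (w-1) = Phi \<mu> z + H"
            using 3 Ar Phir Pz by (simp add: bb_def algebra_simps)
          thus ?thesis by (intro range_eqI[of _ _ "w-1"]) simp
        qed
      next
        case False
        hence H0: "H = 0" by (auto simp: H_def)
        show ?thesis
        proof (cases "z < l")
          case True
          have al: "a < l" using True z by auto
          have "SRi \<mu> z = SLi \<mu> p + (\<Sum>u\<in>supp \<mu>. if z < u \<and> u < p then \<mu> u else 0)"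
            using SRi_diff[OF fin, of z p] True lp by simp
          moreover have "\<mu> l \<le> (\<Sum>u\<in>supp \<mu>. if z < u \<and> u < p then \<mu> u else 0)"
            using sum_ge_term[OF nn, of z p l] z True lp by auto
          ultimately have v0: "SRi \<mu> z \<ge> w + 1" using lpos[OF al] by (simp add: w_def)
          have Av: "A (SRi \<mu> z) = Phi \<mu> z - z * of_int (SRi \<mu> z)"
            unfolding A_def using z
          proof (intro canon_at[OF F])
            fix y assume "a \<le> y" "y \<le> b"
            show "Phi \<mu> y \<le> Phi \<mu> z + of_int (SRi \<mu> z) * (y - z)"
            proof (rule Sup_line[OF nn])
              assume "a < z"
              hence "\<mu> z \<ge> 0" using nn z True lp unfolding nonneg_def by auto
              thus "real_of_int (SRi \<mu> z) \<le> of_int (SLi \<mu> z)" using SLi_SRi[OF fin, of z] by simp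
            qed (use z \<open>a \<le> y\<close> \<open>y \<le> b\<close> in auto)
          qed auto
          have "bb (SRi \<mu> z) + z * of_int (SRi \<mu> z) = Phi \<mu> z + H"
            using v0 Av H0 by (simp add: bb_def)
          thus ?thesis by (intro range_eqI[of _ _ "SRi \<mu> z"]) simp
        next
          case False
          hence zr: "r < z" using \<open>\<not> (l \<le> z \<and> z \<le> r)\<close> lp by auto
          have rb: "r < b" using zr z by auto
          have "SLi \<mu> p = SLi \<mu> z + (\<Sum>u\<in>supp \<mu>. if p \<le> u \<and> u < z then \<mu> u else 0)"
            using SLi_diff[OF fin, of p z] zr lp by simp
          moreover have "(\<Sum>u\<in>supp \<mu>. if p \<le> u \<and> u < z then \<mu> u else 0) = (\<Sum>u\<in>supp \<mu>. if p < u \<and> u < z then \<mu> u else 0)"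
          proof (rule sum.cong)
            fix u assume "u \<in> supp \<mu>"
            hence "u \<noteq> p" using p0 by (auto simp: supp_def)
            thus "(if p \<le> u \<and> u < z then \<mu> u else 0) = (if p < u \<and> u < z then \<mu> u else 0)" by auto
          qed simp
          moreover have "\<mu> r \<le> (\<Sum>u\<in>supp \<mu>. if p < u \<and> u < z then \<mu> u else 0)"
            using sum_ge_term[OF nn, of p z r] z zr lp p by auto
          ultimately have v0: "SLi \<mu> z \<le> w - 1" using rpos[OF rb] by (simp add: w_def)
          have Av: "A (SLi \<mu> z) = Phi \<mu> z - z * of_int (SLi \<mu> z)"
            unfolding A_def using z
          proof (intro canon_at[OF F])
            fix y assume "a \<le> y" "y \<le> b"
            show "Phi \<mu> y \<le> Phi \<mu> z + of_int (SLi \<mu> z) * (y - z)"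
            proof (rule Sup_line[OF nn])
              assume "z < b"
              hence "\<mu> z \<ge> 0" using nn z zr lp unfolding nonneg_def by auto
              thus "real_of_int (SRi \<mu> z) \<le> of_int (SLi \<mu> z)" using SLi_SRi[OF fin, of z] by simp
            qed (use z \<open>a \<le> y\<close> \<open>y \<le> b\<close> in auto)
          qed auto
          have "bb (SLi \<mu> z) + z * of_int (SLi \<mu> z) = Phi \<mu> z + H"
            using v0 Av H0 by (simp add: bb_def)
          thus ?thesis by (intro range_eqI[of _ _ "SLi \<mu> z"]) simp
        qed
      qed
    next
      fix t assume "t \<in> range (\<lambda>v. bb v + z * of_int v)"
      then obtain v where t: "t = bb v + z * of_int v" by auto
      have Agz: "Phi \<mu> z - z * of_int v \<le> A v" using Age z by auto
      show "Phi \<mu> z + H \<le> t"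
      proof (cases "v = w")
        case True
        have "Phi \<mu> z - z * of_int w \<le> Phi \<mu> p - p * of_int w" using Age[of z w] z Aw by auto
        thus ?thesis using True t bbw Hle by (simp add: algebra_simps)
      next
        case vw: False
        hence tv: "t = A v + z * of_int v" using t by (simp add: bb_def)
        show ?thesis
        proof (cases "H > 0")
          case False
          thus ?thesis using tv Agz Hle by simp
        next
          case True
          hence zz: "l < z" "z < r" "H \<le> z - l" "H \<le> r - z" by (auto simp: H_def)
          have Pz: "Phi \<mu> z = Phi \<mu> p + of_int w * (z - p)" using lin[of z] zz by simp
          show ?thesis
          proof (cases "v > w")
            case True
            hence "of_int v * (z - l) \<ge> of_int (w+1) * (z - l)" using zz by (intro mult_right_mono) auto
            moreover have "Phi \<mu> l - l * of_int v \<le> A v" using Age lp by auto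
            ultimately show ?thesis using tv Phil Pz zz by (simp add: algebra_simps)
          next
            case False
            hence "v \<le> w - 1" using vw by simp
            hence "of_int v * (r - z) \<le> of_int (w-1) * (r - z)" using zz by (intro mult_right_mono) auto
            moreover have "Phi \<mu> r - r * of_int v \<le> A v" using Age lp by auto
            ultimately show ?thesis using tv Phir Pz zz by (simp add: algebra_simps)
          qed
        qed
      qed
    qed
    thus "G_op a b p F z = Phi (mv \<mu> p) z" using Gz PM by simp
  qed
qed

end


context trop begin

lemma Phi_mono_mv:
  assumes nn: "nonneg \<mu>" and p: "a < p" "p < b"
  shows "Phi \<mu> z \<le> Phi (mv \<mu> p) z"
proof (cases "\<mu> p = 0")
  case True
  show ?thesis using Phi_mv[OF nn p True, of z] by simp
qed (simp add: mv_def)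

lemma U_step:
  assumes nn: "nonneg \<mu>" and nv: "nonneg \<nu>" and p: "a < p" "p < b" and vp: "\<nu> p > 0"
    and le: "\<forall>z\<in>{a..b}. Phi \<mu> z \<le> Phi \<nu> z"
  shows "\<forall>z\<in>{a..b}. Phi (mv \<mu> p) z \<le> Phi \<nu> z"
proof (cases "\<mu> p = 0")
  case False thus ?thesis using le by (simp add: mv_def)
next
  case p0: True
  note g = gap[OF nn p p0]
  have fin: "finite (supp \<mu>)" using nn by (simp add: nonneg_def)
  have finv: "finite (supp \<nu>)" using nv by (simp add: nonneg_def)
  define l where "l = lft \<mu> p"
  define r where "r = rgt \<mu> p"
  define w where "w = SLi \<mu> p"
  define d where "d = dd \<mu> p"
  have d': "d = min (p - l) (r - p)" by (simp add: d_def dd_def l_def r_def)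
  have lp: "a \<le> l" "l < p" "p < r" "r \<le> b" using g by (auto simp: l_def r_def)
  have dd': "d \<le> p - l" "d \<le> r - p" using d' by auto
  have sep: "\<And>u. \<mu> u \<noteq> 0 \<Longrightarrow> u \<le> l \<or> r \<le> u" using g(7) by (simp add: l_def r_def)
  have lin: "\<And>z. l \<le> z \<Longrightarrow> z \<le> r \<Longrightarrow> Phi \<mu> z = Phi \<mu> p + of_int w * (z - p)"
    unfolding w_def by (rule Lin[OF fin sep]) (use lp in auto)
  have Phil: "Phi \<mu> l = Phi \<mu> p + of_int w * (l - p)" using lin[of l] lp by simp
  have Phir: "Phi \<mu> r = Phi \<mu> p + of_int w * (r - p)" using lin[of r] lp by simp
  have Ql: "Phi \<mu> l \<le> Phi \<nu> l" using le lp by auto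
  have Qr: "Phi \<mu> r \<le> Phi \<nu> r" using le lp by auto
  show ?thesis
  proof
    fix z assume z: "z \<in> {a..b}"
    define H where "H = max 0 (min (z - l) (min d (r - z)))"
    have PM: "Phi (mv \<mu> p) z = Phi \<mu> z + H"
      using Phi_mv[OF nn p p0] by (simp add: H_def l_def r_def d_def)
    show "Phi (mv \<mu> p) z \<le> Phi \<nu> z"
    proof (cases "H > 0")
      case False
      thus ?thesis using PM le z by force
    next
      case True
      hence zz: "l < z" "z < r" "H \<le> z - l" "H \<le> r - z" "H \<le> d" by (auto simp: H_def)
      have Pz: "Phi \<mu> z = Phi \<mu> p + of_int w * (z - p)" using lin[of z] zz by simp
      show ?thesis
      proof (rule ccontr)
        assume c: "\<not> Phi (mv \<mu> p) z \<le> Phi \<nu> z"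
        hence c': "Phi \<nu> z < Phi \<mu> z + H" using PM by simp
        define s where "s = SRi \<nu> z"
        have zint: "a < z" "z < b" using zz lp by auto
        have sup: "\<And>y. a \<le> y \<Longrightarrow> y \<le> b \<Longrightarrow> Phi \<nu> y \<le> Phi \<nu> z + of_int s * (y - z)"
        proof -
          fix y assume y: "a \<le> y" "y \<le> b"
          show "Phi \<nu> y \<le> Phi \<nu> z + of_int s * (y - z)"
          proof (rule Sup_line[OF nv])
            show "real_of_int s \<le> of_int (SLi \<nu> z)"
              using SLi_SRi[OF finv, of z] nv zint unfolding s_def nonneg_def by simp
          qed (use zint y s_def in simp_all)
        qed
        consider "s \<ge> w + 1" | "s \<le> w - 1" | "s = w" by linarith
        thus False
        proof cases
          case 1
          have "of_int s * (z - l) \<ge> of_int (w+1) * (z - l)" using 1 zz by (intro mult_right_mono) auto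
          moreover have "Phi \<nu> l \<le> Phi \<nu> z + of_int s * (l - z)" using sup[of l] lp zint by simp
          ultimately show False using c' Ql Phil Pz zz by (simp add: algebra_simps)
        next
          case 2
          have "of_int s * (r - z) \<le> of_int (w-1) * (r - z)" using 2 zz by (intro mult_right_mono) auto
          moreover have "Phi \<nu> r \<le> Phi \<nu> z + of_int s * (r - z)" using sup[of r] lp zint by simp
          ultimately show False using c' Qr Phir Pz zz by (simp add: algebra_simps)
        next
          case 3
          have Qp: "Phi \<nu> p \<le> Phi \<nu> z + of_int w * (p - z)" using sup[of p] p 3 by simp
          have SLSR: "SLi \<nu> p = SRi \<nu> p + \<nu> p" using SLi_SRi[OF finv] .
          show False
          proof (cases "SLi \<nu> p \<ge> w + 1")
            case True
            have "Phi \<nu> p - Phi \<nu> l \<ge> of_int (SLi \<nu> p) * (p - l)" using L2[OF nv, of l p] lp p by simp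
            moreover have "of_int (SLi \<nu> p) * (p - l) \<ge> of_int (w+1) * (p - l)"
              using True lp by (intro mult_right_mono) auto
            ultimately show False using c' Ql Qp Phil Pz zz dd' by (simp add: algebra_simps)
          next
            case False
            hence SR: "SRi \<nu> p \<le> w - 1" using SLSR vp by simp
            have "Phi \<nu> r - Phi \<nu> p \<le> of_int (SRi \<nu> p) * (r - p)" using L1[OF nv, of p r] lp p by simp
            moreover have "of_int (SRi \<nu> p) * (r - p) \<le> of_int (w-1) * (r - p)"
              using SR lp by (intro mult_right_mono) auto
            ultimately show False using c' Qr Qp Phir Pz zz dd' by (simp add: algebra_simps)
          qed
        qed
      qed
    qed
  qed
qed

end


primrec stt :: "real \<Rightarrow> real \<Rightarrow> (nat \<Rightarrow> real) \<Rightarrow> nat \<Rightarrow> (real \<Rightarrow> int)" where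
  "stt a b pt 0 = (\<lambda>_. 0)"
| "stt a b pt (Suc m) = trop.mv a b (stt a b pt m) (pt m)"

lemma Phi_zero: "Phi (\<lambda>_. 0) z = 0"
  by (simp add: Phi_def supp_def)

locale rel = trop +
  fixes pt :: "nat \<Rightarrow> real" and PS :: "real set"
  assumes finPS: "finite PS" and PSin: "\<And>x. x \<in> PS \<Longrightarrow> a < x \<and> x < b"
    and ptPS: "\<And>m. pt m \<in> PS"
begin

abbreviation st where "st m \<equiv> stt a b pt m"

lemma pt_in: "a < pt m" "pt m < b" using PSin[OF ptPS[of m]] by auto

lemma nn_st: "nonneg (st m)"
proof (induction m)
  case 0 show ?case by (simp add: nonneg_def supp_def)
next
  case (Suc m) thus ?case using nonneg_mv[OF Suc pt_in] by simp
qed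

definition eff :: "nat \<Rightarrow> bool" where "eff m \<longleftrightarrow> st m (pt m) = 0"

lemma st_noneff: "\<not> eff m \<Longrightarrow> st (Suc m) = st m"
  by (simp add: eff_def mv_def)

definition nu :: "real \<Rightarrow> int" where
  "nu u = (if u \<in> PS then 1 else if u = a then - int (card PS) else 0)"

lemma aPS: "a \<notin> PS" using PSin by force

lemma nonneg_nu: "nonneg nu"
proof -
  have "supp nu \<subseteq> insert a PS" by (auto simp: supp_def nu_def split: if_splits)
  hence "finite (supp nu)" using finPS finite_subset by auto
  thus ?thesis unfolding nonneg_def nu_def by auto
qed

lemma Phi_nu: "Phi nu z = of_nat (card PS) * ramp (z - a) - (\<Sum>x\<in>PS. ramp (z - x))"
proof -
  have "supp nu \<subseteq> insert a PS" by (auto simp: supp_def nu_def split: if_splits)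
  hence "Phi nu z = - (\<Sum>u\<in>insert a PS. of_int (nu u) * ramp (z - u))"
    unfolding Phi_def using finPS by (subst sum_supp[where T="insert a PS"]) auto
  also have "\<dots> = - (of_int (nu a) * ramp (z - a) + (\<Sum>u\<in>PS. of_int (nu u) * ramp (z - u)))"
    using finPS aPS by simp
  also have "(\<Sum>u\<in>PS. of_int (nu u) * ramp (z - u)) = (\<Sum>u\<in>PS. ramp (z - u))"
    by (rule sum.cong) (auto simp: nu_def)
  finally have "Phi nu z = - (of_int (nu a) * ramp (z - a) + (\<Sum>u\<in>PS. ramp (z - u)))" .
  moreover have "nu a = - int (card PS)" using aPS by (simp add: nu_def)
  ultimately show ?thesis by simp
qed

lemma nu_bounds:
  assumes "a \<le> z" "z \<le> b"
  shows "0 \<le> Phi nu z" "Phi nu z \<le> of_nat (card PS) * (b - a)"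
proof -
  have r: "ramp (z - a) = z - a" using assms by (simp add: ramp_def)
  have "(\<Sum>x\<in>PS. ramp (z - x)) \<le> of_nat (card PS) * (z - a)"
    by (rule sum_bounded_above) (use assms PSin in \<open>force simp: ramp_def\<close>)
  thus "0 \<le> Phi nu z" using r by (simp add: Phi_nu)
  have "(\<Sum>x\<in>PS. ramp (z - x)) \<ge> 0" by (intro sum_nonneg) (simp add: ramp_def)
  moreover have "of_nat (card PS) * (z - a) \<le> of_nat (card PS) * (b - a)"
    using assms by (intro mult_left_mono) auto
  ultimately show "Phi nu z \<le> of_nat (card PS) * (b - a)" using r by (simp add: Phi_nu)
qed

lemma bound: "\<forall>z\<in>{a..b}. Phi (st m) z \<le> Phi nu z"
proof (induction m)
  case 0 show ?case using nu_bounds(1) by (simp add: Phi_zero)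
next
  case (Suc m)
  have "nu (pt m) > 0" using ptPS[of m] by (simp add: nu_def)
  thus ?case using U_step[OF nn_st nonneg_nu pt_in _ Suc] by simp
qed

definition V :: "nat \<Rightarrow> real" where "V m = (\<Sum>x\<in>PS. Phi (st m) x)"

lemma V_le: "V m \<le> of_nat (card PS) * (of_nat (card PS) * (b - a))"
  unfolding V_def
proof (rule sum_bounded_above)
  fix x assume x: "x \<in> PS"
  hence "a \<le> x" "x \<le> b" using PSin by force+
  thus "Phi (st m) x \<le> of_nat (card PS) * (b - a)" using bound[of m] nu_bounds[of x] by force
qed

lemma V_step: "V m + (if eff m then dd (st m) (pt m) else 0) \<le> V (Suc m)"
proof (cases "eff m")
  case False thus ?thesis using st_noneff[OF False] by (simp add: V_def)
next
  case True
  let ?\<mu> = "st m" and ?p = "pt m"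
  have p0: "?\<mu> ?p = 0" using True by (simp add: eff_def)
  define Hf where "Hf x = max 0 (min (x - lft ?\<mu> ?p) (min (dd ?\<mu> ?p) (rgt ?\<mu> ?p - x)))" for x
  have "V (Suc m) = (\<Sum>x\<in>PS. Phi ?\<mu> x + Hf x)"
    unfolding V_def Hf_def using Phi_mv[OF nn_st pt_in p0] by simp
  also have "\<dots> = V m + (\<Sum>x\<in>PS. Hf x)" by (simp add: V_def sum.distrib)
  finally have eq: "V (Suc m) = V m + (\<Sum>x\<in>PS. Hf x)" .
  have "Hf ?p \<le> (\<Sum>x\<in>PS. Hf x)"
    by (rule member_le_sum) (auto simp: Hf_def finPS ptPS)
  moreover have "Hf ?p = dd ?\<mu> ?p"
  proof -
    note g = gap[OF nn_st pt_in p0]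
    thus ?thesis unfolding Hf_def dd_def by (auto simp: min_def max_def)
  qed
  ultimately show ?thesis using eq True by simp
qed

lemma V_count:
  assumes "\<epsilon> \<ge> 0"
  shows "\<epsilon> * of_nat (card {j. j < m \<and> eff j \<and> \<epsilon> \<le> dd (st j) (pt j)}) \<le> V m"
proof (induction m)
  case 0 show ?case by (simp add: V_def Phi_zero)
next
  case (Suc m)
  let ?P = "\<lambda>j. eff j \<and> \<epsilon> \<le> dd (st j) (pt j)"
  show ?case
  proof (cases "?P m")
    case True
    have "{j. j < Suc m \<and> ?P j} = insert m {j. j < m \<and> ?P j}" using True by auto
    hence "card {j. j < Suc m \<and> ?P j} = Suc (card {j. j < m \<and> ?P j})" by simp
    hence "\<epsilon> * of_nat (card {j. j < Suc m \<and> ?P j}) = \<epsilon> * of_nat (card {j. j < m \<and> ?P j}) + \<epsilon>"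
      by (simp add: algebra_simps)
    also have "\<dots> \<le> V m + dd (st m) (pt m)" using Suc True by simp
    also have "\<dots> \<le> V (Suc m)" using V_step[of m] True by simp
    finally show ?thesis .
  next
    case False
    have "{j. j < Suc m \<and> ?P j} = {j. j < m \<and> ?P j}" using False less_Suc_eq by auto
    moreover have "V m \<le> V (Suc m)" unfolding V_def
      by (rule sum_mono) (simp add: Phi_mono_mv[OF nn_st pt_in])
    ultimately show ?thesis using Suc by simp
  qed
qed

lemma fin_big:
  assumes eps: "\<epsilon> > 0"
  shows "finite {m. eff m \<and> \<epsilon> \<le> dd (st m) (pt m)}"
proof (rule ccontr)
  let ?S = "{m. eff m \<and> \<epsilon> \<le> dd (st m) (pt m)}"
  let ?C = "of_nat (card PS) * (of_nat (card PS) * (b - a))"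
  assume "infinite ?S"
  define K where "K = Suc (nat \<lceil>?C / \<epsilon>\<rceil>)"
  obtain Bs where Bs: "finite Bs" "card Bs = K" "Bs \<subseteq> ?S"
    using infinite_arbitrarily_large[OF \<open>infinite ?S\<close>] by blast
  have ne: "Bs \<noteq> {}" using Bs K_def by auto
  define m where "m = Suc (Max Bs)"
  have "Bs \<subseteq> {j. j < m \<and> eff j \<and> \<epsilon> \<le> dd (st j) (pt j)}"
    using Bs Max_ge[OF Bs(1)] unfolding m_def by (auto simp: less_Suc_eq_le)
  hence "card Bs \<le> card {j. j < m \<and> eff j \<and> \<epsilon> \<le> dd (st j) (pt j)}"
    by (intro card_mono) auto
  hence "\<epsilon> * of_nat K \<le> \<epsilon> * of_nat (card {j. j < m \<and> eff j \<and> \<epsilon> \<le> dd (st j) (pt j)})"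
    using Bs eps by simp
  also have "\<dots> \<le> V m" using V_count eps by simp
  also have "\<dots> \<le> ?C" by (rule V_le)
  finally have A: "\<epsilon> * of_nat K \<le> ?C" .
  have "?C / \<epsilon> < of_nat K" unfolding K_def by linarith
  hence "?C < \<epsilon> * of_nat K" using eps by (simp add: divide_less_eq mult.commute)
  thus False using A by simp
qed

end


context rel begin

definition fr :: "real \<Rightarrow> bool" where "fr x \<longleftrightarrow> a < x \<and> x < b \<and> x \<notin> PS"
definition NF :: "(real \<Rightarrow> int) \<Rightarrow> int" where
  "NF \<mu> = (\<Sum>u\<in>supp \<mu>. if fr u then \<mu> u else 0)"

lemma NF_add: assumes fin: "finite (supp \<mu>)"
  shows "NF (add x c \<mu>) = NF \<mu> + (if fr x then c else 0)"
proof -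
  let ?T = "insert x (supp \<mu>)"
  have "NF (add x c \<mu>) = (\<Sum>u\<in>?T. if fr u then add x c \<mu> u else 0)"
    unfolding NF_def using fin supp_add by (subst sum_supp[where T="?T"]) auto
  also have "\<dots> = (\<Sum>u\<in>?T. (if fr u then \<mu> u else 0) + (if u = x then (if fr x then c else 0) else 0))"
    by (rule sum.cong) (auto simp: add_def)
  also have "\<dots> = (\<Sum>u\<in>?T. if fr u then \<mu> u else 0) + (if fr x then c else 0)"
    using fin by (simp add: sum.distrib)
  also have "(\<Sum>u\<in>?T. if fr u then \<mu> u else 0) = NF \<mu>"
    unfolding NF_def using fin by (subst sum_supp[where T="?T"]) auto
  finally show ?thesis .
qed

lemma NF_nonneg: "nonneg \<mu> \<Longrightarrow> NF \<mu> \<ge> 0"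
  unfolding NF_def nonneg_def fr_def by (intro sum_nonneg) auto

lemma NF_mv:
  assumes nn: "nonneg \<mu>" and p: "p \<in> PS" and p0: "\<mu> p = 0"
  shows "NF (mv \<mu> p) = NF \<mu> + (if fr (lft \<mu> p + rgt \<mu> p - p) then 1 else 0)
            - (if fr (lft \<mu> p) then 1 else 0) - (if fr (rgt \<mu> p) then 1 else 0)"
proof -
  have fin: "finite (supp \<mu>)" using nn by (simp add: nonneg_def)
  have "\<not> fr p" using p by (simp add: fr_def)
  thus ?thesis using p0 fin by (simp add: mv_def NF_add finite_supp_add)
qed

definition BB :: "real set" where "BB = insert a (insert b PS)"

lemma finBB: "finite BB" using finPS by (simp add: BB_def)

definition dB :: "real \<Rightarrow> real" where "dB u = Min ((\<lambda>x. \<bar>u - x\<bar>) ` BB)"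

lemma dB_eq:
  assumes sepB: "\<forall>x\<in>BB. \<forall>y\<in>BB. x \<noteq> y \<longrightarrow> \<delta> \<le> \<bar>x - y\<bar>"
    and x: "x \<in> BB" and ux: "\<bar>u - x\<bar> < \<delta> / 2"
  shows "dB u = \<bar>u - x\<bar>"
  unfolding dB_def
proof (rule Min_eqI)
  show "finite ((\<lambda>x. \<bar>u - x\<bar>) ` BB)" using finBB by simp
  show "\<bar>u - x\<bar> \<in> (\<lambda>x. \<bar>u - x\<bar>) ` BB" using x by simp
  fix t assume "t \<in> (\<lambda>x. \<bar>u - x\<bar>) ` BB"
  then obtain y where y: "y \<in> BB" "t = \<bar>u - y\<bar>" by auto
  show "\<bar>u - x\<bar> \<le> t"
  proof (cases "y = x")
    case False
    hence "\<delta> \<le> \<bar>x - y\<bar>" using sepB x y by auto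
    thus ?thesis using y ux by linarith
  qed (use y in simp)
qed

lemma dB_pos: assumes "fr u" shows "dB u > 0"
proof -
  have "u \<notin> BB" using assms by (auto simp: fr_def BB_def)
  moreover have "BB \<noteq> {}" by (simp add: BB_def)
  ultimately show ?thesis unfolding dB_def using finBB
    by (subst Min_gr_iff) auto
qed

lemma small:
  assumes nn: "nonneg \<mu>" and p: "p \<in> PS" and p0: "\<mu> p = 0" and dpos: "\<delta> > 0"
    and sepB: "\<forall>x\<in>BB. \<forall>y\<in>BB. x \<noteq> y \<longrightarrow> \<delta> \<le> \<bar>x - y\<bar>"
    and sm: "dd \<mu> p < \<delta> / 3"
  shows "\<exists>e. fr e \<and> \<mu> e > 0 \<and> dB e = dd \<mu> p"
    and "NF (mv \<mu> p) \<le> NF \<mu>"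
    and "NF (mv \<mu> p) = NF \<mu> \<Longrightarrow> fr (lft \<mu> p + rgt \<mu> p - p) \<Longrightarrow> dB (lft \<mu> p + rgt \<mu> p - p) = dd \<mu> p"
proof -
  have pab: "a < p" "p < b" using PSin[OF p] by auto
  note g = gap[OF nn pab p0]
  define l where "l = lft \<mu> p"
  define r where "r = rgt \<mu> p"
  define d where "d = dd \<mu> p"
  define q where "q = l + r - p"
  have d': "d = min (p - l) (r - p)" by (simp add: d_def dd_def l_def r_def)
  have lp: "a \<le> l" "l < p" "p < r" "r \<le> b" using g by (auto simp: l_def r_def)
  have pB: "p \<in> BB" "a \<in> BB" "b \<in> BB" using p by (auto simp: BB_def)
  have PSB: "\<And>x. x \<in> PS \<Longrightarrow> x \<in> BB" by (simp add: BB_def)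
  have NFeq: "NF (mv \<mu> p) = NF \<mu> + (if fr q then 1 else 0) - (if fr l then 1 else 0) - (if fr r then 1 else 0)"
    using NF_mv[OF nn p p0] by (simp add: q_def l_def r_def)
  have dlt: "d < \<delta> / 3" using sm by (simp add: d_def)
  have "(\<exists>e. fr e \<and> \<mu> e > 0 \<and> dB e = d) \<and> NF (mv \<mu> p) \<le> NF \<mu> \<and>
        (NF (mv \<mu> p) = NF \<mu> \<longrightarrow> fr q \<longrightarrow> dB q = d)"
  proof (cases "p - l \<le> r - p")
    case True
    hence dl: "d = p - l" using d' by simp
    have al: "a < l"
    proof (rule ccontr)
      assume "\<not> a < l" hence "l = a" using lp by simp
      hence "\<delta> \<le> \<bar>p - a\<bar>" using sepB pB pab by force
      thus False using dl dlt \<open>l = a\<close> lp dpos by linarith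
    qed
    have ml: "\<mu> l > 0" using g(5) al by (simp add: l_def)
    have lPS: "l \<notin> PS"
    proof
      assume "l \<in> PS"
      hence "\<delta> \<le> \<bar>p - l\<bar>" using sepB pB PSB lp by force
      thus False using dl dlt lp dpos by linarith
    qed
    have frl: "fr l" using al lPS lp pab by (simp add: fr_def)
    have ab: "\<bar>l - p\<bar> = d" using dl lp by (simp add: abs_if)
    have dBl: "dB l = d" using dB_eq[OF sepB pB(1), of l] ab dlt dpos by simp
    have S3: "fr q \<longrightarrow> \<not> fr r \<longrightarrow> dB q = d"
    proof (intro impI)
      assume "fr q" "\<not> fr r"
      have rB: "r \<in> BB"
      proof (cases "r < b")
        case True thus ?thesis using \<open>\<not> fr r\<close> lp pab PSB by (auto simp: fr_def)
      qed (use lp pB in auto)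
      have "\<bar>q - r\<bar> = d" using dl lp by (simp add: q_def abs_if)
      thus "dB q = d" using dB_eq[OF sepB rB, of q] dlt dpos by simp
    qed
    show ?thesis using frl ml dBl NFeq S3 by auto
  next
    case False
    hence dr: "d = r - p" using d' by simp
    have rb: "r < b"
    proof (rule ccontr)
      assume "\<not> r < b" hence "r = b" using lp by simp
      hence "\<delta> \<le> \<bar>b - p\<bar>" using sepB pB pab by force
      thus False using dr dlt \<open>r = b\<close> lp dpos by linarith
    qed
    have mr: "\<mu> r > 0" using g(6) rb by (simp add: r_def)
    have rPS: "r \<notin> PS"
    proof
      assume "r \<in> PS"
      hence "\<delta> \<le> \<bar>r - p\<bar>" using sepB pB PSB lp by force
      thus False using dr dlt lp dpos by linarith
    qed
    have frr: "fr r" using rb rPS lp pab by (simp add: fr_def)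
    have ab: "\<bar>r - p\<bar> = d" using dr lp by (simp add: abs_if)
    have dBr: "dB r = d" using dB_eq[OF sepB pB(1), of r] ab dlt dpos by simp
    have S3: "fr q \<longrightarrow> \<not> fr l \<longrightarrow> dB q = d"
    proof (intro impI)
      assume "fr q" "\<not> fr l"
      have lB: "l \<in> BB"
      proof (cases "a < l")
        case True thus ?thesis using \<open>\<not> fr l\<close> lp pab PSB by (auto simp: fr_def)
      qed (use lp pB in auto)
      have "\<bar>q - l\<bar> = d" using dr lp by (simp add: q_def abs_if)
      thus "dB q = d" using dB_eq[OF sepB lB, of q] dlt dpos by simp
    qed
    show ?thesis using frr mr dBr NFeq S3 by auto
  qed
  thus "\<exists>e. fr e \<and> \<mu> e > 0 \<and> dB e = dd \<mu> p" "NF (mv \<mu> p) \<le> NF \<mu>"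
    "NF (mv \<mu> p) = NF \<mu> \<Longrightarrow> fr (lft \<mu> p + rgt \<mu> p - p) \<Longrightarrow> dB (lft \<mu> p + rgt \<mu> p - p) = dd \<mu> p"
    by (auto simp: d_def q_def l_def r_def)
qed

lemma inv_step:
  assumes nn: "nonneg \<mu>" and p: "p \<in> PS" and p0: "\<mu> p = 0" and dpos: "\<delta> > 0"
    and sepB: "\<forall>x\<in>BB. \<forall>y\<in>BB. x \<noteq> y \<longrightarrow> \<delta> \<le> \<bar>x - y\<bar>"
    and sm: "dd \<mu> p < \<delta> / 3" and eq: "NF (mv \<mu> p) = NF \<mu>"
    and I: "\<forall>u. fr u \<and> \<mu> u > 0 \<longrightarrow> dB u \<in> D"
  shows "\<forall>u. fr u \<and> mv \<mu> p u > 0 \<longrightarrow> dB u \<in> D"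
proof (intro allI impI)
  fix u assume u: "fr u \<and> mv \<mu> p u > 0"
  note S = small[OF nn p p0 dpos sepB sm]
  show "dB u \<in> D"
  proof (cases "u = lft \<mu> p + rgt \<mu> p - p")
    case True
    obtain e where e: "fr e" "\<mu> e > 0" "dB e = dd \<mu> p" using S(1) by auto
    have "dB u = dd \<mu> p" using S(3)[OF eq] u True by simp
    thus ?thesis using I e by auto
  next
    case False
    have "u \<noteq> p" using u p by (auto simp: fr_def)
    hence "mv \<mu> p u \<le> \<mu> u" using False p0 by (simp add: mv_apply)
    thus ?thesis using I u by auto
  qed
qed

lemma sep_exists: "\<exists>\<delta>>0. \<forall>x\<in>BB. \<forall>y\<in>BB. x \<noteq> y \<longrightarrow> \<delta> \<le> \<bar>x - y\<bar>"
proof -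
  define DS where "DS = (\<lambda>(x, y). \<bar>x - y\<bar>) ` {(x, y). x \<in> BB \<and> y \<in> BB \<and> x \<noteq> y}"
  have "finite {(x, y). x \<in> BB \<and> y \<in> BB \<and> x \<noteq> y}"
    by (rule finite_subset[of _ "BB \<times> BB"]) (auto simp: finBB)
  hence fin: "finite (insert 1 DS)" by (simp add: DS_def)
  have pos: "\<forall>t\<in>insert 1 DS. 0 < t" by (auto simp: DS_def)
  show ?thesis
  proof (intro exI[of _ "Min (insert 1 DS)"] conjI ballI impI)
    show "0 < Min (insert 1 DS)" using fin pos by (subst Min_gr_iff) auto
    fix x y assume "x \<in> BB" "y \<in> BB" "x \<noteq> y"
    hence "\<bar>x - y\<bar> \<in> insert 1 DS" by (auto simp: DS_def)
    thus "Min (insert 1 DS) \<le> \<bar>x - y\<bar>" using fin by (rule Min_le[rotated])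
  qed
qed

lemma stabilize: "\<exists>m0. \<forall>m\<ge>m0. st m = st m0"
proof -
  obtain \<delta> where dpos: "\<delta> > 0" and sepB: "\<forall>x\<in>BB. \<forall>y\<in>BB. x \<noteq> y \<longrightarrow> \<delta> \<le> \<bar>x - y\<bar>"
    using sep_exists by blast
  have "finite {m. eff m \<and> \<delta> / 3 \<le> dd (st m) (pt m)}" by (rule fin_big) (use dpos in simp)
  then obtain T1 where T1: "\<And>m. eff m \<Longrightarrow> \<delta> / 3 \<le> dd (st m) (pt m) \<Longrightarrow> m < T1"
    unfolding finite_nat_set_iff_bounded by blast
  have smallm: "\<And>m. m \<ge> T1 \<Longrightarrow> eff m \<Longrightarrow> dd (st m) (pt m) < \<delta> / 3"
    using T1 by force
  have NFdec: "\<And>m. m \<ge> T1 \<Longrightarrow> NF (st (Suc m)) \<le> NF (st m)"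
  proof -
    fix m assume m: "m \<ge> T1"
    show "NF (st (Suc m)) \<le> NF (st m)"
    proof (cases "eff m")
      case True
      have p0: "st m (pt m) = 0" using True by (simp add: eff_def)
      show ?thesis using small(2)[OF nn_st ptPS p0 dpos sepB smallm[OF m True]] by simp
    qed (simp add: eff_def mv_def)
  qed
  define f where "f m = nat (NF (st m))" for m
  have fdec: "\<And>m. m \<ge> T1 \<Longrightarrow> f (Suc m) \<le> f m"
    using NFdec unfolding f_def by (simp add: nat_mono)
  define v0 where "v0 = (LEAST v. \<exists>m\<ge>T1. f m = v)"
  have "\<exists>m\<ge>T1. f m = v0" unfolding v0_def by (rule LeastI_ex) auto
  then obtain T2 where T2: "T2 \<ge> T1" "f T2 = v0" by auto
  have vmin: "\<And>m. m \<ge> T1 \<Longrightarrow> v0 \<le> f m" unfolding v0_def by (rule Least_le) auto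
  have fle: "\<And>m. m \<ge> T2 \<Longrightarrow> f m \<le> f T2"
  proof -
    fix m assume "m \<ge> T2"
    thus "f m \<le> f T2"
    proof (induction rule: dec_induct)
      case (step n) thus ?case using fdec[of n] T2 by simp
    qed simp
  qed
  have fconst: "\<And>m. m \<ge> T2 \<Longrightarrow> f m = f T2" using fle vmin T2 by (metis le_antisym order_trans)
  have NFconst: "\<And>m. m \<ge> T2 \<Longrightarrow> NF (st (Suc m)) = NF (st m)"
  proof -
    fix m assume "m \<ge> T2"
    hence "f (Suc m) = f m" using fconst[of m] fconst[of "Suc m"] by simp
    thus "NF (st (Suc m)) = NF (st m)" using NF_nonneg[OF nn_st] unfolding f_def
      by (metis nat_eq_iff2)
  qed
  define D where "D = dB ` {u. fr u \<and> st T2 u > 0}"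
  have finD: "finite D"
  proof -
    have "{u. fr u \<and> st T2 u > 0} \<subseteq> supp (st T2)" by (auto simp: supp_def)
    moreover have "finite (supp (st T2))" using nn_st by (simp add: nonneg_def)
    ultimately show ?thesis unfolding D_def using finite_subset by auto
  qed
  have Dpos: "\<forall>t\<in>D. t > 0" using dB_pos by (auto simp: D_def)
  define \<epsilon> where "\<epsilon> = Min (insert (\<delta>/3) D)"
  have eps: "\<epsilon> > 0" unfolding \<epsilon>_def using finD Dpos dpos by (subst Min_gr_iff) auto
  have epsD: "\<And>t. t \<in> D \<Longrightarrow> \<epsilon> \<le> t" unfolding \<epsilon>_def using finD by (intro Min_le) auto
  have Inv: "\<And>m. m \<ge> T2 \<Longrightarrow> \<forall>u. fr u \<and> st m u > 0 \<longrightarrow> dB u \<in> D"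
  proof -
    fix m assume "m \<ge> T2"
    thus "\<forall>u. fr u \<and> st m u > 0 \<longrightarrow> dB u \<in> D"
    proof (induction rule: dec_induct)
      case base show ?case by (auto simp: D_def)
    next
      case (step n)
      show ?case
      proof (cases "eff n")
        case True
        have p0: "st n (pt n) = 0" using True by (simp add: eff_def)
        have "n \<ge> T1" using step T2 by simp
        have "NF (mv (st n) (pt n)) = NF (st n)" using NFconst[of n] step by simp
        from inv_step[OF nn_st ptPS p0 dpos sepB smallm[OF \<open>n \<ge> T1\<close> True] this step(3)]
        show ?thesis by simp
      next
        case False thus ?thesis using step by (simp add: eff_def mv_def)
      qed
    qed
  qed
  have effbig: "\<And>m. m \<ge> T2 \<Longrightarrow> eff m \<Longrightarrow> \<epsilon> \<le> dd (st m) (pt m)"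
  proof -
    fix m assume m: "m \<ge> T2" and e: "eff m"
    have p0: "st m (pt m) = 0" using e by (simp add: eff_def)
    have "m \<ge> T1" using m T2 by simp
    obtain u where u: "fr u" "st m u > 0" "dB u = dd (st m) (pt m)"
      using small(1)[OF nn_st ptPS p0 dpos sepB smallm[OF \<open>m \<ge> T1\<close> e]] by auto
    have "dB u \<in> D" using Inv[OF m] u by auto
    thus "\<epsilon> \<le> dd (st m) (pt m)" using epsD u by force
  qed
  have "{m. eff m} \<subseteq> {..<T2} \<union> {m. eff m \<and> \<epsilon> \<le> dd (st m) (pt m)}"
    using effbig by force
  moreover have "finite ({..<T2} \<union> {m. eff m \<and> \<epsilon> \<le> dd (st m) (pt m)})"
    using fin_big[OF eps] by simp
  ultimately have "finite {m. eff m}" by (rule finite_subset)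
  then obtain T3 where T3: "\<And>m. eff m \<Longrightarrow> m < T3"
    unfolding finite_nat_set_iff_bounded by blast
  have "\<forall>m\<ge>T3. st m = st T3"
  proof (intro allI impI)
    fix m assume "m \<ge> T3"
    thus "st m = st T3"
    proof (induction rule: dec_induct)
      case (step n)
      have "\<not> eff n" using T3 step by force
      thus ?case using step by (simp add: eff_def mv_def)
    qed simp
  qed
  thus ?thesis by blast
qed

end


theorem mainTheorem1:
  fixes \<alpha> \<beta> :: real and n :: nat and p :: "nat \<Rightarrow> real" and k :: "nat \<Rightarrow> nat"
  assumes "\<alpha> < \<beta>"
    and "\<forall>i\<in>{1..n}. p i \<in> {\<alpha><..<\<beta>}"
    and "\<forall>m\<ge>1. k m \<in> {1..n}"
    and "\<forall>i\<in>{1..n}. infinite {m. m \<ge> 1 \<and> k m = i}"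
  shows "\<exists>m0\<ge>1. \<forall>m\<ge>m0. \<forall>z\<in>{\<alpha>..\<beta>}. relax \<alpha> \<beta> p k m z = relax \<alpha> \<beta> p k m0 z"
proof -
  interpret T: trop \<alpha> \<beta> using assms(1) by unfold_locales
  define PS where "PS = p ` {1..n}"
  define pt where "pt m = p (k (Suc m))" for m
  interpret R: rel \<alpha> \<beta> pt PS
  proof unfold_locales
    show "finite PS" by (simp add: PS_def)
    fix x assume "x \<in> PS"
    thus "\<alpha> < x \<and> x < \<beta>" using assms(2) by (auto simp: PS_def)
  next
    fix m
    have "k (Suc m) \<in> {1..n}" using assms(3) by simp
    thus "pt m \<in> PS" by (simp add: pt_def PS_def)
  qed
  have releq: "\<forall>z\<in>{\<alpha>..\<beta>}. relax \<alpha> \<beta> p k m z = Phi (stt \<alpha> \<beta> pt m) z" for m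
  proof (induction m)
    case 0 show ?case by (simp add: Phi_zero)
  next
    case (Suc m)
    have "\<forall>z\<in>{\<alpha>..\<beta>}. G_op \<alpha> \<beta> (pt m) (relax \<alpha> \<beta> p k m) z = Phi (T.mv (stt \<alpha> \<beta> pt m) (pt m)) z"
      by (rule T.G_step[OF R.nn_st R.pt_in Suc])
    moreover have "relax \<alpha> \<beta> p k (Suc m) = G_op \<alpha> \<beta> (pt m) (relax \<alpha> \<beta> p k m)"
      by (simp add: pt_def)
    ultimately show ?case by simp
  qed
  obtain m0 where m0: "\<forall>m\<ge>m0. stt \<alpha> \<beta> pt m = stt \<alpha> \<beta> pt m0" using R.stabilize by blast
  show ?thesis
  proof (intro exI[of _ "max m0 1"] conjI allI impI ballI)
    show "1 \<le> max m0 1" by simp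
    fix m z assume m: "max m0 1 \<le> m" and z: "z \<in> {\<alpha>..\<beta>}"
    have "stt \<alpha> \<beta> pt m = stt \<alpha> \<beta> pt (max m0 1)" using m0 m by (metis max.cobounded1 order_trans)
    thus "relax \<alpha> \<beta> p k m z = relax \<alpha> \<beta> p k (max m0 1) z" using releq z by simp
  qed
qed

end
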